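(* Let $G$ be a locally compact abelian group with compact identity component. Then the Braconnier modular function $\mathrm{mod}_G$ takes values in $\mathbb Q$.
   Context: The Braconnier modular function $\mathrm{mod}_G:\mathrm{Aut}(G)\to(0,\infty)$ is defined by $\mu(\alpha(S))=\mathrm{mod}_G(\alpha)\mu(S)$ for a Haar measure $\mu$ on $G$, all $\alpha\in\mathrm{Aut}(G)$ (bicontinuous automorphisms) and Borel sets $S$. *)

theory Defs
  imports "HOL-Analysis.Analysis"
begin

definition haar_measure :: "'a::{topological_ab_group_add,t2_space} measure \<Rightarrow> bool" where
  "haar_measure \<mu> \<longleftrightarrow>
     sets \<mu> = sets borel \<and>
     emeasure \<mu> (space \<mu>) \<noteq> 0 \<and>
     (\<forall>g. \<forall>A\<in>sets borel. emeasure \<mu> ((\<lambda>x. g + x) ` A) = emeasure \<mu> A) \<and>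
     (\<forall>K. compact K \<longrightarrow> emeasure \<mu> K < \<infinity>) \<and>
     (\<forall>A\<in>sets borel. emeasure \<mu> A = (INF U\<in>{U. open U \<and> A \<subseteq> U}. emeasure \<mu> U)) \<and>
     (\<forall>U. open U \<longrightarrow> emeasure \<mu> U = (SUP K\<in>{K. compact K \<and> K \<subseteq> U}. emeasure \<mu> K))"

definition top_group_aut :: "('a::topological_ab_group_add \<Rightarrow> 'a) \<Rightarrow> bool" where
  "top_group_aut \<alpha> \<longleftrightarrow>
     (\<forall>x y. \<alpha> (x + y) = \<alpha> x + \<alpha> y) \<and> (\<exists>\<beta>. homeomorphism UNIV UNIV \<alpha> \<beta>)"

definition braconnier_mod :: "'a::{topological_ab_group_add,t2_space} measure \<Rightarrow> ('a \<Rightarrow> 'a) \<Rightarrow> real" where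
  "braconnier_mod \<mu> \<alpha> =
     (THE c. c > 0 \<and> (\<forall>S\<in>sets borel. emeasure \<mu> (\<alpha> ` S) = ennreal c * emeasure \<mu> S))"

end

theory Submission
  imports Defs
begin


lemma Hausdorff_t2: "Hausdorff_space (euclidean :: 'a::t2_space topology)"
  unfolding Hausdorff_space_def by (metis disjnt_def hausdorff open_openin)

lemma conn_comp_eq:
  "connected_component_of_set euclidean x = connected_component_set UNIV x"
  unfolding connected_component_of_def connected_component_def by auto

lemma hom_open: "homeomorphism UNIV UNIV f g \<Longrightarrow> open A \<Longrightarrow> open (f ` A)"
  using homeomorphism_imp_open_map[of UNIV UNIV f g A] by simp

lemma hom_closed: "homeomorphism UNIV UNIV f g \<Longrightarrow> closed A \<Longrightarrow> closed (f ` A)"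
  using homeomorphism_imp_closed_map[of UNIV UNIV f g A] by simp

lemma hom_compact: "homeomorphism UNIV UNIV f g \<Longrightarrow> compact A \<Longrightarrow> compact (f ` A)"
  by (meson compact_continuous_image continuous_on_subset homeomorphism_def top_greatest)

lemma hom_borel: "homeomorphism UNIV UNIV f g \<Longrightarrow> A \<in> sets borel \<Longrightarrow> f ` A \<in> sets borel"
proof -
  assume h: "homeomorphism UNIV UNIV f g" and A: "A \<in> sets borel"
  have "f ` A = g -` A \<inter> space borel" using h unfolding homeomorphism_def by force
  moreover have "g \<in> borel_measurable borel"
    using h unfolding homeomorphism_def by (intro borel_measurable_continuous_onI) auto
  ultimately show ?thesis using A by (metis measurable_sets)
qed

lemma trans_hom: "homeomorphism UNIV UNIV ((+) (a::'a::topological_group_add)) ((+) (-a))"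
  unfolding homeomorphism_def
  by (auto simp: add.assoc[symmetric] intro!: continuous_intros image_eqI[where x="-a + x" for x])

lemma exists_compact_open_nbhd:
  fixes C :: "'a::{topological_ab_group_add,t2_space} set"
  assumes lc: "locally_compact_space (euclidean :: 'a topology)"
    and cC: "compact (connected_component_set UNIV (0::'a))"
  obtains V :: "'a set" where "compact V" "open V" "0 \<in> V"
proof -
  let ?C = "connected_component_set UNIV (0::'a)"
  obtain U L where UL: "open U" "compact L" "?C \<subseteq> U" "U \<subseteq> L"
    using lc cC Hausdorff_t2 locally_compact_space_compact_closed_compact
    by (metis compactin_euclidean_iff open_openin)
  have "?C \<in> connected_components_of euclidean"
    by (metis connected_component_in_connected_components_of conn_comp_eq UNIV_I topspace_euclidean)
  then obtain A B where AB: "openin euclidean A" "openin euclidean B" "disjnt A B"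
      "A \<union> B = topspace euclidean" "?C \<subseteq> A" "A \<subseteq> U"
    using wilder_locally_compact_component_thm[OF lc Hausdorff_t2, of ?C U] cC UL
    by (metis compactin_euclidean_iff open_openin)
  have "A = - B" using AB(3,4) by (auto simp: disjnt_def)
  then have "closed A" using AB(2) by (simp add: open_openin[symmetric] closed_Compl)
  then have "compact A" using UL AB(6) by (metis compact_Int_closed inf.absorb_iff2 order_trans)
  moreover have "0 \<in> A" using AB(5) by auto
  ultimately show ?thesis using that AB(1) open_openin by blast
qed



lemma cont_open_pre: "continuous_on UNIV f \<Longrightarrow> open S \<Longrightarrow> open (f -` S)"
  using continuous_on_open_vimage[of UNIV f] by auto

lemma exists_compact_open_subgroup:
  fixes V :: "'a::{topological_ab_group_add,t2_space} set"
  assumes cV: "compact V" and oV: "open V" and V0: "0 \<in> V"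
  obtains H :: "'a set" where "compact H" "open H" "0 \<in> H" "\<And>x y. x \<in> H \<Longrightarrow> y \<in> H \<Longrightarrow> x + y \<in> H"
    "\<And>x. x \<in> H \<Longrightarrow> - x \<in> H"
proof -
  have oP: "open ((\<lambda>p::'a\<times>'a. fst p + snd p) -` V)"
    by (intro cont_open_pre oV continuous_intros)
  have "\<forall>v\<in>V. \<exists>AN. open (fst AN) \<and> open (snd AN) \<and> v \<in> fst AN \<and> (0::'a) \<in> snd AN \<and>
          (\<forall>a\<in>fst AN. \<forall>n\<in>snd AN. a + n \<in> V)"
  proof
    fix v assume "v \<in> V"
    then have "(v, 0) \<in> (\<lambda>p::'a\<times>'a. fst p + snd p) -` V" by simp
    then obtain A N where "open A" "open N" "(v,0) \<in> A \<times> N" "A \<times> N \<subseteq> (\<lambda>p::'a\<times>'a. fst p + snd p) -` V"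
      by (rule open_prod_elim[OF oP])
    then show "\<exists>AN. open (fst AN) \<and> open (snd AN) \<and> v \<in> fst AN \<and> (0::'a) \<in> snd AN \<and>
          (\<forall>a\<in>fst AN. \<forall>n\<in>snd AN. a + n \<in> V)"
      by (intro exI[of _ "(A,N)"]) auto
  qed
  then obtain AN where AN0: "\<forall>v\<in>V. open (fst (AN v)) \<and> open (snd (AN v)) \<and> v \<in> fst (AN v) \<and> (0::'a) \<in> snd (AN v) \<and>
          (\<forall>a\<in>fst (AN v). \<forall>n\<in>snd (AN v). a + n \<in> V)"
    by (metis bchoice)
  then have AN: "\<And>v. v \<in> V \<Longrightarrow> open (fst (AN v)) \<and> open (snd (AN v)) \<and> v \<in> fst (AN v) \<and> (0::'a) \<in> snd (AN v) \<and>
          (\<forall>a\<in>fst (AN v). \<forall>n\<in>snd (AN v). a + n \<in> V)" by blast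
  obtain F where F: "F \<subseteq> V" "finite F" "V \<subseteq> (\<Union>v\<in>F. fst (AN v))"
    using compactE_image[OF cV, of V "\<lambda>v. fst (AN v)"] AN by blast
  define N0 where "N0 = (\<Inter>v\<in>F. snd (AN v))"
  have oN0: "open N0" unfolding N0_def using F AN by (intro open_INT) auto
  have N00: "0 \<in> N0" unfolding N0_def using F AN by auto
  define N where "N = N0 \<inter> uminus -` N0"
  have oN: "open N" unfolding N_def by (intro open_Int oN0 cont_open_pre continuous_intros)
  have N0': "0 \<in> N" using N00 by (simp add: N_def)
  have Nsym: "- n \<in> N" if "n \<in> N" for n using that by (simp add: N_def)
  have VN: "x + n \<in> V" if xV: "x \<in> V" and nN: "n \<in> N" for x n
  proof -
    obtain v where v: "v \<in> F" "x \<in> fst (AN v)" using F xV by blast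
    then have "n \<in> snd (AN v)" using nN by (auto simp: N_def N0_def)
    then show ?thesis using AN[of v] v F by blast
  qed
  define H where "H = {x. (+) x ` V = V}"
  have H0: "0 \<in> H" by (simp add: H_def)
  have Hadd: "x + y \<in> H" if "x \<in> H" "y \<in> H" for x y
  proof -
    have "(+) (x + y) ` V = (+) x ` ((+) y ` V)" by (auto simp: image_image add.assoc)
    then show ?thesis using that by (simp add: H_def)
  qed
  have Hneg: "- x \<in> H" if "x \<in> H" for x
  proof -
    have "(+) (- x) ` V = (+) (-x) ` ((+) x ` V)" using that by (simp add: H_def)
    also have "\<dots> = V" by (auto simp: image_image add.assoc[symmetric])
    finally show ?thesis by (simp add: H_def)
  qed
  have HV: "H \<subseteq> V"
  proof
    fix x assume "x \<in> H"
    then have "x + 0 \<in> V" using V0 unfolding H_def by blast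
    then show "x \<in> V" by simp
  qed
  have NH: "N \<subseteq> H"
  proof
    fix n assume n: "n \<in> N"
    have "(+) n ` V \<subseteq> V" using VN n by (auto simp: add.commute)
    moreover have "V \<subseteq> (+) n ` V"
    proof
      fix v assume "v \<in> V"
      then have "- n + v \<in> V" using VN Nsym n by (metis add.commute)
      then show "v \<in> (+) n ` V" by (intro image_eqI[of _ _ "- n + v"]) (auto simp: add.assoc[symmetric])
    qed
    ultimately show "n \<in> H" by (simp add: H_def)
  qed
  have oH: "open H"
  proof -
    have "H = (\<Union>h\<in>H. (+) h ` N)"
    proof
      show "H \<subseteq> (\<Union>h\<in>H. (+) h ` N)" using N0' by force
      show "(\<Union>h\<in>H. (+) h ` N) \<subseteq> H" using NH Hadd by blast
    qed
    moreover have "open ((+) h ` N)" for h using hom_open[OF trans_hom oN] .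
    ultimately show ?thesis by (metis open_UN)
  qed
  have cH: "closed H"
  proof -
    have "- H = (\<Union>g\<in>- H. (+) g ` H)"
    proof
      show "- H \<subseteq> (\<Union>g\<in>- H. (+) g ` H)" using H0 by force
      show "(\<Union>g\<in>- H. (+) g ` H) \<subseteq> - H"
      proof clarify
        fix g h assume "g \<notin> H" "h \<in> H" "g + h \<in> H"
        then have "(g + h) + (- h) \<in> H" using Hadd Hneg by blast
        then show False using \<open>g \<notin> H\<close> by simp
      qed
    qed
    moreover have "open ((+) g ` H)" for g using hom_open[OF trans_hom oH] .
    ultimately have "open (- H)" by (metis open_UN)
    then show ?thesis by (simp add: closed_open)
  qed
  have "compact H" using HV cH cV by (metis compact_Int_closed inf.absorb_iff2)
  then show ?thesis by (rule that[of H, OF _ oH H0 Hadd Hneg])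
qed



definition subgrp :: "'a::ab_group_add set \<Rightarrow> bool" where
  "subgrp H \<longleftrightarrow> 0 \<in> H \<and> (\<forall>x\<in>H. \<forall>y\<in>H. x + y \<in> H) \<and> (\<forall>x\<in>H. - x \<in> H)"

lemma subgrp_self_trans: "subgrp H \<Longrightarrow> h \<in> H \<Longrightarrow> (+) h ` H = H"
proof -
  assume s: "subgrp H" and h: "h \<in> H"
  show ?thesis
  proof
    show "(+) h ` H \<subseteq> H" using s h by (auto simp: subgrp_def)
    show "H \<subseteq> (+) h ` H"
    proof
      fix y assume "y \<in> H"
      then have "- h + y \<in> H" using s h unfolding subgrp_def by blast
      then show "y \<in> (+) h ` H" by (intro image_eqI[of _ _ "- h + y"]) (auto simp: add.assoc[symmetric])
    qed
  qed
qed

lemma coset_eq: "subgrp H \<Longrightarrow> x \<in> (+) g ` H \<Longrightarrow> (+) x ` H = (+) g ` H"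
proof -
  assume s: "subgrp H" and "x \<in> (+) g ` H"
  then obtain h where h: "h \<in> H" "x = g + h" by auto
  have "(+) x ` H = (+) g ` ((+) h ` H)" using h by (auto simp: image_image add.assoc)
  then show ?thesis using subgrp_self_trans[OF s h(1)] by simp
qed

lemma coset_disj: "subgrp H \<Longrightarrow> z \<in> (+) g ` H \<Longrightarrow> z \<in> (+) g' ` H \<Longrightarrow> (+) g ` H = (+) g' ` H"
  by (metis coset_eq)

lemma coset_self: "subgrp H \<Longrightarrow> g \<in> (+) g ` H"
  by (intro image_eqI[of _ _ 0]) (auto simp: subgrp_def)

lemma finite_cosets:
  fixes H :: "'a::{topological_ab_group_add,t2_space} set"
  assumes "subgrp H" "open H" "compact K"
  shows "finite ((\<lambda>g. (+) g ` H) ` K)"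
proof -
  have "\<And>g. g \<in> K \<Longrightarrow> open ((+) g ` H)" using hom_open[OF trans_hom assms(2)] by blast
  moreover have "K \<subseteq> (\<Union>g\<in>K. (+) g ` H)" using coset_self[OF assms(1)] by blast
  ultimately obtain F where F: "F \<subseteq> K" "finite F" "K \<subseteq> (\<Union>g\<in>F. (+) g ` H)"
    using compactE_image[OF assms(3), of K "\<lambda>g. (+) g ` H"] by metis
  have "(\<lambda>g. (+) g ` H) ` K \<subseteq> (\<lambda>g. (+) g ` H) ` F"
  proof
    fix C assume "C \<in> (\<lambda>g. (+) g ` H) ` K"
    then obtain k where k: "k \<in> K" "C = (+) k ` H" by auto
    then obtain g where "g \<in> F" "k \<in> (+) g ` H" using F by blast
    then show "C \<in> (\<lambda>g. (+) g ` H) ` F" using k coset_eq[OF assms(1)] by blast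
  qed
  then show ?thesis using F(2) finite_subset by blast
qed

lemma tube:
  fixes K :: "'a::{topological_ab_group_add,t2_space} set"
  assumes cK: "compact K" and oV: "open V" and KV: "K \<subseteq> V"
  obtains N :: "'a set" where "open N" "0 \<in> N" "\<And>n. n \<in> N \<Longrightarrow> - n \<in> N"
    "\<And>x n. x \<in> K \<Longrightarrow> n \<in> N \<Longrightarrow> x + n \<in> V"
proof -
  have oP: "open ((\<lambda>p::'a\<times>'a. fst p + snd p) -` V)"
    by (intro cont_open_pre oV continuous_intros)
  have "\<forall>v\<in>K. \<exists>AN. open (fst AN) \<and> open (snd AN) \<and> v \<in> fst AN \<and> (0::'a) \<in> snd AN \<and>
          (\<forall>a\<in>fst AN. \<forall>n\<in>snd AN. a + n \<in> V)"
  proof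
    fix v assume "v \<in> K"
    then have "(v, 0) \<in> (\<lambda>p::'a\<times>'a. fst p + snd p) -` V" using KV by auto
    then obtain A N where "open A" "open N" "(v,0) \<in> A \<times> N" "A \<times> N \<subseteq> (\<lambda>p::'a\<times>'a. fst p + snd p) -` V"
      by (rule open_prod_elim[OF oP])
    then show "\<exists>AN. open (fst AN) \<and> open (snd AN) \<and> v \<in> fst AN \<and> (0::'a) \<in> snd AN \<and>
          (\<forall>a\<in>fst AN. \<forall>n\<in>snd AN. a + n \<in> V)"
      by (intro exI[of _ "(A,N)"]) auto
  qed
  then obtain AN where AN0: "\<forall>v\<in>K. open (fst (AN v)) \<and> open (snd (AN v)) \<and> v \<in> fst (AN v) \<and> (0::'a) \<in> snd (AN v) \<and>
          (\<forall>a\<in>fst (AN v). \<forall>n\<in>snd (AN v). a + n \<in> V)"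
    by (metis bchoice)
  then have AN: "\<And>v. v \<in> K \<Longrightarrow> open (fst (AN v)) \<and> open (snd (AN v)) \<and> v \<in> fst (AN v) \<and> (0::'a) \<in> snd (AN v) \<and>
          (\<forall>a\<in>fst (AN v). \<forall>n\<in>snd (AN v). a + n \<in> V)" by blast
  obtain F where F: "F \<subseteq> K" "finite F" "K \<subseteq> (\<Union>v\<in>F. fst (AN v))"
    using compactE_image[OF cK, of K "\<lambda>v. fst (AN v)"] AN by blast
  define N0 where "N0 = (\<Inter>v\<in>F. snd (AN v))"
  have oN0: "open N0" unfolding N0_def using F AN by (intro open_INT) auto
  have N00: "0 \<in> N0" unfolding N0_def using F AN by auto
  define N where "N = N0 \<inter> uminus -` N0"
  have oN: "open N" unfolding N_def by (intro open_Int oN0 cont_open_pre continuous_intros)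
  have N0': "0 \<in> N" using N00 by (simp add: N_def)
  have Nsym: "- n \<in> N" if "n \<in> N" for n using that by (simp add: N_def)
  have VN: "x + n \<in> V" if xV: "x \<in> K" and nN: "n \<in> N" for x n
  proof -
    obtain v where v: "v \<in> F" "x \<in> fst (AN v)" using F xV by blast
    then have "n \<in> snd (AN v)" using nN by (auto simp: N_def N0_def)
    then show ?thesis using AN[of v] v F by blast
  qed
  show ?thesis by (rule that[of N, OF oN N0' Nsym VN])
qed

lemma ennreal_INF_mult_right:
  fixes c :: ennreal
  assumes "c \<noteq> 0" "c \<noteq> top"
  shows "(INF i\<in>I. f i) * c = (INF i\<in>I. f i * c)"
proof (rule antisym)
  show "(INF i\<in>I. f i) * c \<le> (INF i\<in>I. f i * c)"
    by (intro INF_greatest mult_right_mono INF_lower) auto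
  have "(INF i\<in>I. f i * c) / c \<le> (INF i\<in>I. f i)"
  proof (rule INF_greatest)
    fix i assume "i \<in> I"
    then have "(INF i\<in>I. f i * c) / c \<le> (f i * c) / c" by (intro divide_right_mono_ennreal INF_lower)
    also have "\<dots> = f i" using assms by (simp add: mult_divide_eq_ennreal)
    finally show "(INF i\<in>I. f i * c) / c \<le> f i" .
  qed
  then have "((INF i\<in>I. f i * c) / c) * c \<le> (INF i\<in>I. f i) * c" by (rule mult_right_mono) simp
  moreover have "((INF i\<in>I. f i * c) / c) * c = (INF i\<in>I. f i * c)"
    using assms by (simp add: ennreal_divide_times ennreal_times_divide mult_divide_eq_ennreal)
  ultimately show "(INF i\<in>I. f i * c) \<le> (INF i\<in>I. f i) * c" by simp
qed



context
  fixes \<mu> :: "'a::{topological_ab_group_add,t2_space} measure"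
  assumes H: "haar_measure \<mu>"
begin

lemma haar_sets: "sets \<mu> = sets borel"
  by (rule H[unfolded haar_measure_def, THEN conjunct1])

lemma haar_space: "space \<mu> = UNIV"
  using sets_eq_imp_space_eq[OF haar_sets] by simp

lemma haar_trans: "A \<in> sets borel \<Longrightarrow> emeasure \<mu> ((+) g ` A) = emeasure \<mu> A"
  by (rule H[unfolded haar_measure_def, THEN conjunct2, THEN conjunct2, THEN conjunct1, rule_format])

lemma haar_fin: "compact K \<Longrightarrow> emeasure \<mu> K < \<infinity>"
  by (rule H[unfolded haar_measure_def, THEN conjunct2, THEN conjunct2, THEN conjunct2, THEN conjunct1, rule_format])

lemma haar_outer: "A \<in> sets borel \<Longrightarrow> emeasure \<mu> A = (INF U\<in>{U. open U \<and> A \<subseteq> U}. emeasure \<mu> U)"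
  by (rule H[unfolded haar_measure_def, THEN conjunct2, THEN conjunct2, THEN conjunct2, THEN conjunct2, THEN conjunct1, rule_format])

lemma haar_inner: "open U \<Longrightarrow> emeasure \<mu> U = (SUP K\<in>{K. compact K \<and> K \<subseteq> U}. emeasure \<mu> K)"
  by (rule H[unfolded haar_measure_def, THEN conjunct2, THEN conjunct2, THEN conjunct2, THEN conjunct2, THEN conjunct2, rule_format])

lemma haar_nonzero: "emeasure \<mu> UNIV \<noteq> 0"
  using H[unfolded haar_measure_def, THEN conjunct2, THEN conjunct1] haar_space by simp

lemma haar_pos:
  assumes s: "subgrp W" and oW: "open W"
  shows "emeasure \<mu> W \<noteq> 0"
proof
  assume W0: "emeasure \<mu> W = 0"
  have K0: "emeasure \<mu> K = 0" if cK: "compact K" for K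
  proof -
    let ?C = "(\<lambda>g. (+) g ` W) ` K"
    have fin: "finite ?C" by (rule finite_cosets[OF s oW cK])
    have Cb: "C \<in> sets \<mu>" if "C \<in> ?C" for C
      using that hom_open[OF trans_hom oW] by (auto simp: haar_sets)
    have C0: "emeasure \<mu> C = 0" if "C \<in> ?C" for C
      using that haar_trans[of W] W0 oW by auto
    have "K \<subseteq> (\<Union>C\<in>?C. C)" using coset_self[OF s] by blast
    then have "emeasure \<mu> K \<le> emeasure \<mu> (\<Union>C\<in>?C. C)"
      using Cb fin by (intro emeasure_mono) auto
    also have "\<dots> \<le> (\<Sum>C\<in>?C. emeasure \<mu> C)"
      using Cb fin by (intro emeasure_subadditive_finite) auto
    also have "\<dots> = 0" using C0 by simp
    finally show ?thesis by simp
  qed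
  have "emeasure \<mu> UNIV = (SUP K\<in>{K. compact K \<and> K \<subseteq> UNIV}. emeasure \<mu> K)"
    by (rule haar_inner) simp
  also have "\<dots> = 0" by (intro antisym SUP_least) (auto simp: K0)
  finally show False using haar_nonzero by simp
qed

lemma haar_index:
  assumes sW: "subgrp W" and oW: "open W" and sL: "subgrp L" and cL: "compact L" and WL: "W \<subseteq> L"
  shows "emeasure \<mu> L = of_nat (card ((\<lambda>g. (+) g ` W) ` L)) * emeasure \<mu> W"
proof -
  let ?C = "(\<lambda>g. (+) g ` W) ` L"
  have fin: "finite ?C" by (rule finite_cosets[OF sW oW cL])
  have Cb: "id ` ?C \<subseteq> sets \<mu>"
    using hom_open[OF trans_hom oW] by (auto simp: haar_sets)
  have dj: "disjoint_family_on id ?C"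
    unfolding disjoint_family_on_def using coset_disj[OF sW] by fastforce
  have U: "(\<Union>C\<in>?C. id C) = L"
  proof
    show "(\<Union>C\<in>?C. id C) \<subseteq> L" using sL WL by (auto simp: subgrp_def)
    show "L \<subseteq> (\<Union>C\<in>?C. id C)" using coset_self[OF sW] by auto
  qed
  have "emeasure \<mu> L = (\<Sum>C\<in>?C. emeasure \<mu> (id C))"
    using sum_emeasure[OF Cb dj fin] U by (simp only:)
  also have "\<dots> = (\<Sum>C\<in>?C. emeasure \<mu> W)"
  proof (rule sum.cong)
    fix C assume "C \<in> ?C"
    then obtain g where "C = (+) g ` W" by blast
    then show "emeasure \<mu> (id C) = emeasure \<mu> W" using haar_trans[of W g] oW by simp
  qed simp
  also have "\<dots> = of_nat (card ?C) * emeasure \<mu> W" by (rule sum_constant)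
  finally show ?thesis .
qed

end



lemma compact_borel: "compact (K::'a::t2_space set) \<Longrightarrow> K \<in> sets borel"
  by (simp add: borel_closed compact_imp_closed)

lemma compare_sub:
  fixes \<mu> \<nu> :: "'a::{topological_ab_group_add,t2_space} measure"
  assumes Hm: "haar_measure \<mu>" and Hn: "haar_measure \<nu>"
    and cU: "compact U" and oU: "open U" and sU: "subgrp U"
    and cK: "compact K" and KU: "K \<subseteq> U" and oV: "open V" and KV: "K \<subseteq> V"
  shows "emeasure \<mu> K * emeasure \<nu> U \<le> emeasure \<mu> U * emeasure \<nu> V"
proof -
  obtain N where oN: "open N" and N0: "0 \<in> N" and Ns: "\<And>n. n \<in> N \<Longrightarrow> - n \<in> N"
    and KN: "\<And>x n. x \<in> K \<Longrightarrow> n \<in> N \<Longrightarrow> x + n \<in> V"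
    using tube[OF cK oV KV] by blast
  have opn: "\<And>x. x \<in> U \<Longrightarrow> open ((+) x ` N)" using hom_open[OF trans_hom oN] by blast
  have "U \<subseteq> (\<Union>x\<in>U. (+) x ` N)"
  proof
    fix u assume "u \<in> U" then show "u \<in> (\<Union>x\<in>U. (+) x ` N)"
      using N0 by (intro UN_I[of u]) (auto intro: image_eqI[of _ _ 0])
  qed
  then obtain F where F: "F \<subseteq> U" "finite F" "U \<subseteq> (\<Union>x\<in>F. (+) x ` N)"
    using compactE_image[OF cU, of U "\<lambda>x. (+) x ` N"] opn by metis
  obtain m xs where mxs: "F = xs ` {i. i < (m::nat)}"
    using finite_imp_nat_seg_image_inj_on[OF F(2)] by blast
  define A where "A i = (if i < m then U \<inter> (+) (xs i) ` N else {})" for i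
  define P where "P = disjointed A"
  have Ab: "range A \<subseteq> sets borel"
    using hom_open[OF trans_hom oN] oU by (auto simp: A_def)
  then have Pb: "P i \<in> sets borel" for i unfolding P_def using sets.range_disjointed_sets by blast
  have PA: "P i \<subseteq> A i" for i unfolding P_def by (rule disjointed_subset)
  have UA: "(\<Union>i\<in>{0..<m}. A i) = U"
  proof
    show "(\<Union>i\<in>{0..<m}. A i) \<subseteq> U" by (auto simp: A_def)
    show "U \<subseteq> (\<Union>i\<in>{0..<m}. A i)"
    proof
      fix u assume u: "u \<in> U"
      then obtain x where "x \<in> F" "u \<in> (+) x ` N" using F by blast
      then obtain i where "i < m" "u \<in> (+) (xs i) ` N" using mxs by blast
      then show "u \<in> (\<Union>i\<in>{0..<m}. A i)" using u by (auto simp: A_def)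
    qed
  qed
  have PU: "(\<Union>i\<in>{..<m}. P i) = U"
    using UA finite_UN_disjointed_eq[of A m] by (simp add: P_def atLeast0LessThan)
  have dP: "disjoint_family_on P {..<m}"
    unfolding P_def by (rule disjoint_family_on_mono[OF subset_UNIV disjoint_family_disjointed])
  have sumP: "(\<Sum>i<m. emeasure \<mu> (P i)) = emeasure \<mu> U"
  proof -
    have "P ` {..<m} \<subseteq> sets \<mu>" using Pb haar_sets[OF Hm] by auto
    then show ?thesis unfolding PU[symmetric] by (rule sum_emeasure[OF _ dP finite_lessThan])
  qed
  define T where "T i = (+) (- xs i) ` V" for i
  have Tb: "T i \<in> sets borel" for i unfolding T_def by (intro borel_open hom_open[OF trans_hom oV])
  have pw: "emeasure \<mu> K * indicator U y \<le> (\<Sum>i<m. emeasure \<mu> (P i) * indicator (T i) y)" for y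
  proof (cases "y \<in> U")
    case False then show ?thesis by simp
  next
    case yU: True
    let ?J = "{i\<in>{..<m}. y \<in> T i}"
    have "emeasure \<mu> K = emeasure \<mu> ((+) (-y) ` K)"
      by (rule haar_trans[OF Hm compact_borel[OF cK], symmetric])
    also have "\<dots> \<le> emeasure \<mu> (\<Union>i\<in>?J. P i)"
    proof (rule emeasure_mono)
      show "(\<Union>i\<in>?J. P i) \<in> sets \<mu>" using Pb haar_sets[OF Hm] by auto
      show "(+) (- y) ` K \<subseteq> (\<Union>i\<in>?J. P i)"
      proof
        fix x assume "x \<in> (+) (- y) ` K"
        then obtain k where k: "k \<in> K" "x = - y + k" by auto
        then have "x \<in> U" using sU yU KU unfolding subgrp_def by blast
        then obtain i where i: "i < m" "x \<in> P i" using PU by blast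
        then have "x \<in> (+) (xs i) ` N" using PA[of i] by (auto simp: A_def)
        then obtain n where n: "n \<in> N" "x = xs i + n" by auto
        have "k + (- n) \<in> V" using KN[OF k(1) Ns[OF n(1)]] .
        moreover have "xs i + y = k + (- n)"
          using k(2) n(2) by (simp add: algebra_simps)
        ultimately have "xs i + y \<in> V" by simp
        then have "- xs i + (xs i + y) \<in> T i" unfolding T_def by (rule imageI)
        then have "y \<in> T i" by simp
        then show "x \<in> (\<Union>i\<in>?J. P i)" using i by blast
      qed
    qed
    also have "\<dots> \<le> (\<Sum>i\<in>?J. emeasure \<mu> (P i))"
      using Pb haar_sets[OF Hm] by (intro emeasure_subadditive_finite) auto
    also have "\<dots> = (\<Sum>i<m. emeasure \<mu> (P i) * indicator (T i) y)"
      by (simp add: sum.inter_filter indicator_def Int_def lessThan_def conj_commute)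
    finally show ?thesis using yU by simp
  qed
  have "emeasure \<mu> K * emeasure \<nu> U = (\<integral>\<^sup>+ y. emeasure \<mu> K * indicator U y \<partial>\<nu>)"
    using oU haar_sets[OF Hn] by (simp add: nn_integral_cmult_indicator)
  also have "\<dots> \<le> (\<integral>\<^sup>+ y. (\<Sum>i<m. emeasure \<mu> (P i) * indicator (T i) y) \<partial>\<nu>)"
    by (intro nn_integral_mono pw)
  also have "\<dots> = (\<Sum>i<m. (\<integral>\<^sup>+ y. emeasure \<mu> (P i) * indicator (T i) y \<partial>\<nu>))"
  proof (rule nn_integral_sum)
    fix i
    have "T i \<in> sets \<nu>" using Tb haar_sets[OF Hn] by simp
    then show "(\<lambda>y. emeasure \<mu> (P i) * indicator (T i) y) \<in> borel_measurable \<nu>"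
      by (intro borel_measurable_times_ennreal borel_measurable_const borel_measurable_indicator)
  qed
  also have "\<dots> = (\<Sum>i<m. emeasure \<mu> (P i) * emeasure \<nu> V)"
  proof (rule sum.cong)
    fix i
    have "T i \<in> sets \<nu>" using Tb haar_sets[OF Hn] by simp
    then have "(\<integral>\<^sup>+ y. emeasure \<mu> (P i) * indicator (T i) y \<partial>\<nu>) = emeasure \<mu> (P i) * emeasure \<nu> (T i)"
      by (rule nn_integral_cmult_indicator)
    also have "emeasure \<nu> (T i) = emeasure \<nu> V"
      unfolding T_def by (rule haar_trans[OF Hn borel_open[OF oV]])
    finally show "(\<integral>\<^sup>+ y. emeasure \<mu> (P i) * indicator (T i) y \<partial>\<nu>) = emeasure \<mu> (P i) * emeasure \<nu> V" .
  qed simp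
  also have "\<dots> = emeasure \<mu> U * emeasure \<nu> V"
    by (simp only: sum_distrib_right[symmetric] sumP)
  finally show ?thesis .
qed



lemma compare_K_le:
  fixes \<mu> \<nu> :: "'a::{topological_ab_group_add,t2_space} measure"
  assumes Hm: "haar_measure \<mu>" and Hn: "haar_measure \<nu>"
    and cU: "compact U" and oU: "open U" and sU: "subgrp U"
    and cK: "compact K" and KU: "K \<subseteq> U"
  shows "emeasure \<mu> K * emeasure \<nu> U \<le> emeasure \<nu> K * emeasure \<mu> U"
proof -
  have m0: "emeasure \<mu> U \<noteq> 0" using haar_pos[OF Hm sU oU] .
  have mt: "emeasure \<mu> U \<noteq> top" using haar_fin[OF Hm cU] by simp
  have "emeasure \<nu> K * emeasure \<mu> U = (INF V\<in>{V. open V \<and> K \<subseteq> V}. emeasure \<nu> V) * emeasure \<mu> U"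
    using haar_outer[OF Hn compact_borel[OF cK]] by simp
  also have "\<dots> = (INF V\<in>{V. open V \<and> K \<subseteq> V}. emeasure \<nu> V * emeasure \<mu> U)"
    by (rule ennreal_INF_mult_right[OF m0 mt])
  finally have eq: "emeasure \<nu> K * emeasure \<mu> U = (INF V\<in>{V. open V \<and> K \<subseteq> V}. emeasure \<nu> V * emeasure \<mu> U)" .
  have "emeasure \<mu> K * emeasure \<nu> U \<le> (INF V\<in>{V. open V \<and> K \<subseteq> V}. emeasure \<nu> V * emeasure \<mu> U)"
  proof (rule INF_greatest)
    fix V assume "V \<in> {V. open V \<and> K \<subseteq> V}"
    then show "emeasure \<mu> K * emeasure \<nu> U \<le> emeasure \<nu> V * emeasure \<mu> U"
      using compare_sub[OF Hm Hn cU oU sU cK KU, of V] by (simp add: mult.commute)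
  qed
  then show ?thesis using eq by simp
qed

lemma compare_K:
  fixes \<mu> \<nu> :: "'a::{topological_ab_group_add,t2_space} measure"
  assumes Hm: "haar_measure \<mu>" and Hn: "haar_measure \<nu>"
    and cU: "compact U" and oU: "open U" and sU: "subgrp U"
    and cK: "compact K" and KU: "K \<subseteq> U"
  shows "emeasure \<mu> K * emeasure \<nu> U = emeasure \<nu> K * emeasure \<mu> U"
  using compare_K_le[OF Hm Hn cU oU sU cK KU] compare_K_le[OF Hn Hm cU oU sU cK KU] by (rule antisym)

lemma compare_compact:
  fixes \<mu> \<nu> :: "'a::{topological_ab_group_add,t2_space} measure"
  assumes Hm: "haar_measure \<mu>" and Hn: "haar_measure \<nu>"
    and cU: "compact U" and oU: "open U" and sU: "subgrp U"
    and cK: "compact K"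
  shows "emeasure \<mu> K * emeasure \<nu> U = emeasure \<nu> K * emeasure \<mu> U"
proof -
  let ?C = "(\<lambda>g. (+) g ` U) ` K"
  have fin: "finite ?C" by (rule finite_cosets[OF sU oU cK])
  have Cc: "compact (K \<inter> C)" if "C \<in> ?C" for C
  proof -
    obtain g where "C = (+) g ` U" using \<open>C \<in> ?C\<close> by blast
    then have "compact C" using hom_compact[OF trans_hom cU] by simp
    then show ?thesis using cK by (simp add: compact_Int compact_imp_closed compact_Int_closed)
  qed
  have dj: "disjoint_family_on (\<lambda>C. K \<inter> C) ?C"
    unfolding disjoint_family_on_def using coset_disj[OF sU] by fastforce
  have UK: "(\<Union>C\<in>?C. K \<inter> C) = K" using coset_self[OF sU] by blast
  have sm: "emeasure M K = (\<Sum>C\<in>?C. emeasure M (K \<inter> C))" if "haar_measure M" for M :: "'a measure"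
  proof -
    have "(\<lambda>C. K \<inter> C) ` ?C \<subseteq> sets M" using Cc compact_borel haar_sets[OF that] by auto
    from sum_emeasure[OF this dj fin] show ?thesis by (simp only: UK)
  qed
  have each: "emeasure \<mu> (K \<inter> C) * emeasure \<nu> U = emeasure \<nu> (K \<inter> C) * emeasure \<mu> U" if "C \<in> ?C" for C
  proof -
    obtain g where g: "C = (+) g ` U" using \<open>C \<in> ?C\<close> by blast
    define K' where "K' = (+) (- g) ` (K \<inter> C)"
    have cK': "compact K'" unfolding K'_def using hom_compact[OF trans_hom Cc[OF that]] .
    have K'U: "K' \<subseteq> U" unfolding K'_def g by (auto simp: add.assoc[symmetric])
    have "emeasure M K' = emeasure M (K \<inter> C)" if "haar_measure M" for M :: "'a measure"
      unfolding K'_def using haar_trans[OF that compact_borel[OF Cc[OF \<open>C \<in> ?C\<close>]]] .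
    then show ?thesis using compare_K[OF Hm Hn cU oU sU cK' K'U] Hm Hn by simp
  qed
  have "emeasure \<mu> K * emeasure \<nu> U = (\<Sum>C\<in>?C. emeasure \<mu> (K \<inter> C) * emeasure \<nu> U)"
    using sm[OF Hm] by (simp add: sum_distrib_right)
  also have "\<dots> = (\<Sum>C\<in>?C. emeasure \<nu> (K \<inter> C) * emeasure \<mu> U)"
    using each by (rule sum.cong[OF refl])
  also have "\<dots> = emeasure \<nu> K * emeasure \<mu> U"
    using sm[OF Hn] by (simp add: sum_distrib_right)
  finally show ?thesis .
qed

lemma compare_open:
  fixes \<mu> \<nu> :: "'a::{topological_ab_group_add,t2_space} measure"
  assumes Hm: "haar_measure \<mu>" and Hn: "haar_measure \<nu>"
    and cU: "compact U" and oU: "open U" and sU: "subgrp U"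
    and oW: "open W"
  shows "emeasure \<mu> W * emeasure \<nu> U = emeasure \<nu> W * emeasure \<mu> U"
proof -
  have "emeasure \<mu> W * emeasure \<nu> U = (SUP K\<in>{K. compact K \<and> K \<subseteq> W}. emeasure \<mu> K) * emeasure \<nu> U"
    using haar_inner[OF Hm oW] by simp
  also have "\<dots> = (SUP K\<in>{K. compact K \<and> K \<subseteq> W}. emeasure \<mu> K * emeasure \<nu> U)"
    by (rule SUP_mult_right_ennreal)
  also have "\<dots> = (SUP K\<in>{K. compact K \<and> K \<subseteq> W}. emeasure \<nu> K * emeasure \<mu> U)"
    using compare_compact[OF Hm Hn cU oU sU] by (intro SUP_cong) auto
  also have "\<dots> = (SUP K\<in>{K. compact K \<and> K \<subseteq> W}. emeasure \<nu> K) * emeasure \<mu> U"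
    by (rule SUP_mult_right_ennreal[symmetric])
  also have "\<dots> = emeasure \<nu> W * emeasure \<mu> U"
    using haar_inner[OF Hn oW] by simp
  finally show ?thesis .
qed

lemma compare_borel:
  fixes \<mu> \<nu> :: "'a::{topological_ab_group_add,t2_space} measure"
  assumes Hm: "haar_measure \<mu>" and Hn: "haar_measure \<nu>"
    and cU: "compact U" and oU: "open U" and sU: "subgrp U"
    and A: "A \<in> sets borel"
  shows "emeasure \<mu> A * emeasure \<nu> U = emeasure \<nu> A * emeasure \<mu> U"
proof -
  have m0: "emeasure \<mu> U \<noteq> 0" using haar_pos[OF Hm sU oU] .
  have mt: "emeasure \<mu> U \<noteq> top" using haar_fin[OF Hm cU] by simp
  have n0: "emeasure \<nu> U \<noteq> 0" using haar_pos[OF Hn sU oU] .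
  have nt: "emeasure \<nu> U \<noteq> top" using haar_fin[OF Hn cU] by simp
  have "emeasure \<mu> A * emeasure \<nu> U = (INF V\<in>{V. open V \<and> A \<subseteq> V}. emeasure \<mu> V) * emeasure \<nu> U"
    using haar_outer[OF Hm A] by simp
  also have "\<dots> = (INF V\<in>{V. open V \<and> A \<subseteq> V}. emeasure \<mu> V * emeasure \<nu> U)"
    by (rule ennreal_INF_mult_right[OF n0 nt])
  also have "\<dots> = (INF V\<in>{V. open V \<and> A \<subseteq> V}. emeasure \<nu> V * emeasure \<mu> U)"
    using compare_open[OF Hm Hn cU oU sU] by (intro INF_cong) auto
  also have "\<dots> = (INF V\<in>{V. open V \<and> A \<subseteq> V}. emeasure \<nu> V) * emeasure \<mu> U"
    by (rule ennreal_INF_mult_right[OF m0 mt, symmetric])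
  also have "\<dots> = emeasure \<nu> A * emeasure \<mu> U"
    using haar_outer[OF Hn A] by simp
  finally show ?thesis .
qed



lemma haar_distr:
  fixes \<mu> :: "'a::{topological_ab_group_add,t2_space} measure" and \<alpha> \<beta> :: "'a \<Rightarrow> 'a"
  assumes Hm: "haar_measure \<mu>" and add: "\<And>x y. \<alpha> (x + y) = \<alpha> x + \<alpha> y"
    and hom: "homeomorphism UNIV UNIV \<alpha> \<beta>"
  shows "haar_measure (distr \<mu> borel \<beta>)"
    and "\<And>A. A \<in> sets borel \<Longrightarrow> emeasure (distr \<mu> borel \<beta>) A = emeasure \<mu> (\<alpha> ` A)"
proof -
  let ?\<nu> = "distr \<mu> borel \<beta>"
  have homs: "homeomorphism UNIV UNIV \<beta> \<alpha>" using hom by (rule homeomorphism_symD)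
  have ab: "\<And>x. \<alpha> (\<beta> x) = x" and ba: "\<And>x. \<beta> (\<alpha> x) = x" using hom unfolding homeomorphism_def by auto
  have bm: "\<beta> \<in> measurable \<mu> borel"
  proof -
    have "\<beta> \<in> borel_measurable borel"
      using homs unfolding homeomorphism_def by (intro borel_measurable_continuous_onI) auto
    then show ?thesis using measurable_cong_sets[OF haar_sets[OF Hm] refl] by blast
  qed
  have pre: "\<beta> -` A = \<alpha> ` A" for A
  proof
    show "\<beta> -` A \<subseteq> \<alpha> ` A" using ab by (metis image_eqI subsetI vimageE)
    show "\<alpha> ` A \<subseteq> \<beta> -` A" using ba by auto
  qed
  show nu: "\<And>A. A \<in> sets borel \<Longrightarrow> emeasure ?\<nu> A = emeasure \<mu> (\<alpha> ` A)"
    using emeasure_distr[OF bm] pre haar_space[OF Hm] by simp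
  have aU: "\<alpha> ` UNIV = UNIV" using hom unfolding homeomorphism_def by auto
  have ag: "\<alpha> ` ((+) g ` A) = (+) (\<alpha> g) ` (\<alpha> ` A)" for g A
    by (auto simp: image_image add)
  have oimg: "{V. open V \<and> \<alpha> ` A \<subseteq> V} = (\<lambda>W. \<alpha> ` W) ` {W. open W \<and> A \<subseteq> W}" for A
  proof
    show "{V. open V \<and> \<alpha> ` A \<subseteq> V} \<subseteq> (\<lambda>W. \<alpha> ` W) ` {W. open W \<and> A \<subseteq> W}"
    proof
      fix V assume V: "V \<in> {V. open V \<and> \<alpha> ` A \<subseteq> V}"
      have "V = \<alpha> ` (\<beta> ` V)" by (auto simp: image_image ab)
      moreover have "open (\<beta> ` V)" using V hom_open[OF homs] by blast
      moreover have "A \<subseteq> \<beta> ` V"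
      proof
        fix x assume "x \<in> A"
        then have "\<alpha> x \<in> V" using V by blast
        then show "x \<in> \<beta> ` V" by (rule image_eqI[rotated]) (simp add: ba)
      qed
      ultimately show "V \<in> (\<lambda>W. \<alpha> ` W) ` {W. open W \<and> A \<subseteq> W}" by blast
    qed
    show "(\<lambda>W. \<alpha> ` W) ` {W. open W \<and> A \<subseteq> W} \<subseteq> {V. open V \<and> \<alpha> ` A \<subseteq> V}"
      using hom_open[OF hom] by blast
  qed
  have cimg: "{K. compact K \<and> K \<subseteq> \<alpha> ` U} = (\<lambda>W. \<alpha> ` W) ` {K. compact K \<and> K \<subseteq> U}" for U
  proof
    show "{K. compact K \<and> K \<subseteq> \<alpha> ` U} \<subseteq> (\<lambda>W. \<alpha> ` W) ` {K. compact K \<and> K \<subseteq> U}"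
    proof
      fix V assume V: "V \<in> {K. compact K \<and> K \<subseteq> \<alpha> ` U}"
      have "V = \<alpha> ` (\<beta> ` V)" by (auto simp: image_image ab)
      moreover have "compact (\<beta> ` V)" using V hom_compact[OF homs] by blast
      moreover have "\<beta> ` V \<subseteq> U" using V ba by auto
      ultimately show "V \<in> (\<lambda>W. \<alpha> ` W) ` {K. compact K \<and> K \<subseteq> U}" by blast
    qed
    show "(\<lambda>W. \<alpha> ` W) ` {K. compact K \<and> K \<subseteq> U} \<subseteq> {K. compact K \<and> K \<subseteq> \<alpha> ` U}"
      using hom_compact[OF hom] by blast
  qed
  show "haar_measure ?\<nu>"
    unfolding haar_measure_def
  proof (intro conjI allI ballI impI)
    show "sets ?\<nu> = sets borel" by simp
    show "emeasure ?\<nu> (space ?\<nu>) \<noteq> 0"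
      using nu[of UNIV] aU haar_nonzero[OF Hm] by simp
    fix g :: 'a and A :: "'a set" assume A: "A \<in> sets borel"
    have "emeasure ?\<nu> ((+) g ` A) = emeasure \<mu> ((+) (\<alpha> g) ` (\<alpha> ` A))"
      using nu[OF hom_borel[OF trans_hom A]] ag by simp
    also have "\<dots> = emeasure \<mu> (\<alpha> ` A)" by (rule haar_trans[OF Hm hom_borel[OF hom A]])
    finally show "emeasure ?\<nu> ((+) g ` A) = emeasure ?\<nu> A" using nu[OF A] by simp
  next
    fix K :: "'a set" assume "compact K"
    then show "emeasure ?\<nu> K < \<infinity>"
      using nu[OF compact_borel] haar_fin[OF Hm hom_compact[OF hom]] by simp
  next
    fix A :: "'a set" assume A: "A \<in> sets borel"
    have "emeasure ?\<nu> A = (INF V\<in>{V. open V \<and> \<alpha> ` A \<subseteq> V}. emeasure \<mu> V)"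
      using nu[OF A] haar_outer[OF Hm hom_borel[OF hom A]] by simp
    also have "\<dots> = (INF W\<in>{W. open W \<and> A \<subseteq> W}. emeasure \<mu> (\<alpha> ` W))"
      unfolding oimg by (simp add: image_comp)
    also have "\<dots> = (INF W\<in>{W. open W \<and> A \<subseteq> W}. emeasure ?\<nu> W)"
      using nu by (intro INF_cong) auto
    finally show "emeasure ?\<nu> A = (INF W\<in>{W. open W \<and> A \<subseteq> W}. emeasure ?\<nu> W)" .
  next
    fix U :: "'a set" assume U: "open U"
    have "emeasure ?\<nu> U = (SUP K\<in>{K. compact K \<and> K \<subseteq> \<alpha> ` U}. emeasure \<mu> K)"
      using nu[OF borel_open[OF U]] haar_inner[OF Hm hom_open[OF hom U]] by simp
    also have "\<dots> = (SUP K\<in>{K. compact K \<and> K \<subseteq> U}. emeasure \<mu> (\<alpha> ` K))"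
      unfolding cimg by (simp add: image_comp)
    also have "\<dots> = (SUP K\<in>{K. compact K \<and> K \<subseteq> U}. emeasure ?\<nu> K)"
      by (intro SUP_cong refl) (metis (no_types, lifting) mem_Collect_eq nu compact_borel)
    finally show "emeasure ?\<nu> U = (SUP K\<in>{K. compact K \<and> K \<subseteq> U}. emeasure ?\<nu> K)" .
  qed
qed



theorem proposition2p8:
  fixes \<mu> :: "'a::{topological_ab_group_add,t2_space} measure"
    and \<alpha> :: "'a \<Rightarrow> 'a"
  assumes "locally_compact_space (euclidean :: 'a topology)"
    and "compact (connected_component_set UNIV (0::'a))"
    and "haar_measure \<mu>"
    and "top_group_aut \<alpha>"
  shows "braconnier_mod \<mu> \<alpha> \<in> \<rat>"
proof -
  note Hm = assms(3)
  have add: "\<And>x y. \<alpha> (x + y) = \<alpha> x + \<alpha> y" using assms(4) unfolding top_group_aut_def by blast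
  obtain \<beta> where hom: "homeomorphism UNIV UNIV \<alpha> \<beta>" using assms(4) unfolding top_group_aut_def by blast
  have a0: "\<alpha> 0 = 0" using add[of 0 0] by simp
  have aneg: "\<alpha> (- x) = - \<alpha> x" for x using add[of x "- x"] a0 by (simp add: eq_neg_iff_add_eq_0 add.commute)
  obtain V :: "'a set" where V: "compact V" "open V" "0 \<in> V"
    using exists_compact_open_nbhd[OF assms(1,2)] by blast
  obtain U :: "'a set" where cU: "compact U" and oU: "open U" and U0: "0 \<in> U"
    and Uadd: "\<And>x y. x \<in> U \<Longrightarrow> y \<in> U \<Longrightarrow> x + y \<in> U" and Uneg: "\<And>x. x \<in> U \<Longrightarrow> - x \<in> U"
    using exists_compact_open_subgroup[OF V] by blast
  have sU: "subgrp U" using U0 Uadd Uneg by (simp add: subgrp_def)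
  define U' where "U' = \<alpha> ` U"
  have cU': "compact U'" unfolding U'_def by (rule hom_compact[OF hom cU])
  have oU': "open U'" unfolding U'_def by (rule hom_open[OF hom oU])
  have sU': "subgrp U'" unfolding U'_def subgrp_def
  proof (intro conjI ballI)
    show "0 \<in> \<alpha> ` U" using U0 a0 by (metis imageI)
    fix x y assume "x \<in> \<alpha> ` U" "y \<in> \<alpha> ` U"
    then obtain u v where "u \<in> U" "v \<in> U" "x = \<alpha> u" "y = \<alpha> v" by blast
    then show "x + y \<in> \<alpha> ` U" using Uadd add by (metis imageI)
  next
    fix x assume "x \<in> \<alpha> ` U"
    then obtain u where "u \<in> U" "x = \<alpha> u" by blast
    then show "- x \<in> \<alpha> ` U" using Uneg aneg by (metis imageI)
  qed
  define W where "W = U \<inter> U'"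
  have oW: "open W" unfolding W_def using oU oU' by blast
  have sW: "subgrp W" using sU sU' unfolding W_def subgrp_def by blast
  define \<nu> where "\<nu> = distr \<mu> borel \<beta>"
  have Hn: "haar_measure \<nu>" unfolding \<nu>_def by (rule haar_distr(1)[OF Hm add hom])
  have nu: "\<And>A. A \<in> sets borel \<Longrightarrow> emeasure \<nu> A = emeasure \<mu> (\<alpha> ` A)"
    unfolding \<nu>_def by (rule haar_distr(2)[OF Hm add hom])
  define n where "n = card ((\<lambda>g. (+) g ` W) ` U)"
  define m where "m = card ((\<lambda>g. (+) g ` W) ` U')"
  have mU: "emeasure \<mu> U = of_nat n * emeasure \<mu> W"
    unfolding n_def by (rule haar_index[OF Hm sW oW sU cU]) (simp add: W_def)
  have mU': "emeasure \<mu> U' = of_nat m * emeasure \<mu> W"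
    unfolding m_def by (rule haar_index[OF Hm sW oW sU' cU']) (simp add: W_def)
  have W0: "emeasure \<mu> W \<noteq> 0" by (rule haar_pos[OF Hm sW oW])
  have "emeasure \<mu> W \<le> emeasure \<mu> U"
    by (rule emeasure_mono) (auto simp: W_def haar_sets[OF Hm] oU)
  then have "emeasure \<mu> W < \<infinity>" using haar_fin[OF Hm cU] by (rule le_less_trans)
  then have Wt: "emeasure \<mu> W \<noteq> top" by (simp add: less_top)
  define w where "w = enn2real (emeasure \<mu> W)"
  have w: "emeasure \<mu> W = ennreal w" "w > 0" using W0 Wt unfolding w_def
    by (auto simp: enn2real_positive_iff less_top[symmetric] zero_less_iff_neq_zero)
  define a where "a = real n * w"
  define b where "b = real m * w"
  have ea: "emeasure \<mu> U = ennreal a" using mU w unfolding a_def by (simp add: ennreal_mult ennreal_of_nat_eq_real_of_nat)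
  have eb: "emeasure \<mu> U' = ennreal b" using mU' w unfolding b_def by (simp add: ennreal_mult ennreal_of_nat_eq_real_of_nat)
  have a0: "a > 0" using haar_pos[OF Hm sU oU] ea unfolding a_def using w by (auto simp: zero_less_mult_iff)
  have b0: "b > 0" using haar_pos[OF Hm sU' oU'] eb unfolding b_def using w by (auto simp: zero_less_mult_iff)
  define c where "c = b / a"
  have c0: "c > 0" unfolding c_def using a0 b0 by simp
  have keyp: "emeasure \<mu> (\<alpha> ` S) = ennreal c * emeasure \<mu> S" if S: "S \<in> sets borel" for S
  proof -
    have nU: "emeasure \<nu> U = ennreal b" using nu[OF borel_open[OF oU]] eb unfolding U'_def by simp
    have eq: "emeasure \<mu> S * ennreal b = emeasure \<nu> S * ennreal a"
      using compare_borel[OF Hm Hn cU oU sU S] nU ea by simp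
    have "emeasure \<nu> S = (emeasure \<nu> S * ennreal a) / ennreal a"
      using a0 by (simp add: mult_divide_eq_ennreal)
    also have "\<dots> = (emeasure \<mu> S * ennreal b) / ennreal a" using eq by simp
    also have "\<dots> = emeasure \<mu> S * (ennreal b / ennreal a)" by (simp add: ennreal_times_divide)
    also have "\<dots> = emeasure \<mu> S * ennreal c" unfolding c_def using a0 b0 by (simp add: divide_ennreal)
    finally show ?thesis using nu[OF S] by (simp add: mult.commute)
  qed
  have "braconnier_mod \<mu> \<alpha> = c"
    unfolding braconnier_mod_def
  proof (rule the_equality)
    show "c > 0 \<and> (\<forall>S\<in>sets borel. emeasure \<mu> (\<alpha> ` S) = ennreal c * emeasure \<mu> S)"
      using c0 keyp by blast
    fix c' assume c': "c' > 0 \<and> (\<forall>S\<in>sets borel. emeasure \<mu> (\<alpha> ` S) = ennreal c' * emeasure \<mu> S)"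
    then have "ennreal b = ennreal c' * ennreal a"
      using eb ea borel_open[OF oU] unfolding U'_def by auto
    then have "ennreal b = ennreal (c' * a)" using c' a0 by (simp add: ennreal_mult[symmetric])
    then have "b = c' * a" using c' a0 b0 by (subst (asm) ennreal_inj) auto
    then show "c' = c" unfolding c_def using a0 by simp
  qed
  moreover have "c = real m / real n" unfolding c_def a_def b_def using w by simp
  ultimately show ?thesis by simp
qed


end
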